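(* Let $\mathcal{A}$ be a finite alphabet and $\mathcal{F}$ the free group over $\mathcal{A}$. Let $S \subseteq \mathcal{F}$ be product-free, i.e. there are no $x,y,z \in S$ (not necessarily distinct) with $z = x\cdot y$. Then $\bar{d}(S) \leq \frac{1}{2}$.
   Context: Every element $w\in\mathcal{F}$ is identified with its reduced word, and $|w|$ denotes the length of the reduced word. For $A\subseteq \mathcal{F}$ and $n\ge 1$, $A(n)=\{w\in A: |w|=n\}$ and $A_{\le n}=\{w\in A: |w|\le n\}$. The measure $\mu$ on $\mathcal{F}$ is defined by $\mu(\{w\}) = 1/|\mathcal{F}(|w|)| = \frac{1}{2|\mathcal{A}|(2|\mathcal{A}|-1)^{|w|-1}}$, so that each layer of words of a given length has total weight one. The upper asymptotic density is $\bar{d}(A)=\limsup_{n\to\infty}\frac{\mu(A_{\le n})}{\mu(\mathcal{F}_{\le n})}$. *)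

theory Defs
  imports "HOL-Analysis.Analysis"
begin

text \<open>Elements of the free group over an alphabet A (of type 'a) are represented by
their reduced words: lists of letters (a, b) with a \<in> A, where b = True means the
generator a and b = False its inverse, with no two adjacent mutually inverse letters.\<close>

definition inv_letter :: "'a \<times> bool \<Rightarrow> 'a \<times> bool" where
  "inv_letter x = (fst x, \<not> snd x)"

fun reduced :: "('a \<times> bool) list \<Rightarrow> bool" where
  "reduced [] = True"
| "reduced [x] = True"
| "reduced (x # y # ys) = (y \<noteq> inv_letter x \<and> reduced (y # ys))"

definition free_group :: "'a set \<Rightarrow> ('a \<times> bool) list set" where
  "free_group A = {w. set w \<subseteq> A \<times> UNIV \<and> reduced w}"

text \<open>Cancellation of a reversed left factor against a right factor.\<close>
fun cancel :: "('a \<times> bool) list \<Rightarrow> ('a \<times> bool) list \<Rightarrow> ('a \<times> bool) list" where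
  "cancel [] ys = ys"
| "cancel (x # rx) [] = rev (x # rx)"
| "cancel (x # rx) (y # ys) =
     (if y = inv_letter x then cancel rx ys else rev (x # rx) @ y # ys)"

definition wmul :: "('a \<times> bool) list \<Rightarrow> ('a \<times> bool) list \<Rightarrow> ('a \<times> bool) list" where
  "wmul xs ys = cancel (rev xs) ys"

definition product_free :: "('a \<times> bool) list set \<Rightarrow> bool" where
  "product_free S \<longleftrightarrow> (\<forall>x\<in>S. \<forall>y\<in>S. \<forall>z\<in>S. z \<noteq> wmul x y)"

definition layer :: "'a set \<Rightarrow> nat \<Rightarrow> ('a \<times> bool) list set" where
  "layer A n = {w \<in> free_group A. length w = n}"

definition mu_le :: "'a set \<Rightarrow> ('a \<times> bool) list set \<Rightarrow> nat \<Rightarrow> real" where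
  "mu_le A B n = (\<Sum>w\<in>{w \<in> B. length w \<le> n}. 1 / real (card (layer A (length w))))"

definition upper_density :: "'a set \<Rightarrow> ('a \<times> bool) list set \<Rightarrow> ereal" where
  "upper_density A B =
     limsup (\<lambda>n. ereal (mu_le A B n / mu_le A (free_group A) n))"

end

theory Submission
  imports Defs
begin

lemma inv_letter_inv[simp]: "inv_letter (inv_letter x) = x"
  by (simp add: inv_letter_def)

lemma inv_letter_neq[simp]: "inv_letter x \<noteq> x"
  by (cases x) (simp add: inv_letter_def)

lemma inv_letter_eq_iff: "(inv_letter x = y) = (x = inv_letter y)"
  by (auto simp: inv_letter_def)

lemma reduced_Cons: "reduced (x # ys) = (reduced ys \<and> (ys \<noteq> [] \<longrightarrow> hd ys \<noteq> inv_letter x))"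
  by (cases ys) auto

lemma reduced_append:
  "reduced (u @ v) = (reduced u \<and> reduced v \<and> (u \<noteq> [] \<and> v \<noteq> [] \<longrightarrow> hd v \<noteq> inv_letter (last u)))"
proof (induction u)
  case Nil then show ?case by simp
next
  case (Cons x u)
  show ?case
  proof (cases u)
    case Nil then show ?thesis by (simp add: reduced_Cons)
  next
    case (Cons y u') then show ?thesis using Cons.IH by (auto simp: reduced_Cons)
  qed
qed

definition step :: "('a \<times> bool) list \<Rightarrow> 'a \<times> bool \<Rightarrow> ('a \<times> bool) list" where
  "step w a = (if w \<noteq> [] \<and> last w = inv_letter a then butlast w else w @ [a])"

lemma step_reduced: "reduced w \<Longrightarrow> reduced (step w a)"
proof -
  assume r: "reduced w"
  show ?thesis
  proof (cases "w \<noteq> [] \<and> last w = inv_letter a")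
    case True
    have "w = butlast w @ [last w]" using True by (metis append_butlast_last_id)
    then have "reduced (butlast w)" using r reduced_append by metis
    then show ?thesis using True by (simp add: step_def)
  next
    case False
    then show ?thesis using r by (auto simp: step_def reduced_append inv_letter_eq_iff)
  qed
qed

lemma step_inv: "reduced w \<Longrightarrow> step (step w a) (inv_letter a) = w"
proof (cases "w \<noteq> [] \<and> last w = inv_letter a")
  case True
  assume r: "reduced w"
  define w' where "w' = butlast w"
  have w: "w = w' @ [inv_letter a]" using True unfolding w'_def by (metis append_butlast_last_id)
  have "\<not> (w' \<noteq> [] \<and> last w' = a)" using r w by (auto simp: reduced_append)
  then show ?thesis using True w by (auto simp: step_def w'_def[symmetric])
next
  case False
  then show ?thesis by (auto simp: step_def)
qed

lemma length_step: "length (step w a) = (if w \<noteq> [] \<and> last w = inv_letter a then length w - 1 else length w + 1)"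
  by (simp add: step_def)

lemma set_step: "set (step w a) \<subseteq> set w \<union> {a}"
  by (auto simp: step_def dest: in_set_butlastD)

definition red :: "('a \<times> bool) list \<Rightarrow> ('a \<times> bool) list" where
  "red g = foldl step [] g"

lemma foldl_step_reduced: "reduced x \<Longrightarrow> reduced (foldl step x h)"
  by (induction h arbitrary: x) (auto simp: step_reduced)

lemma red_reduced: "reduced (red g)"
  unfolding red_def by (rule foldl_step_reduced) simp

lemma foldl_step_set: "set (foldl step x h) \<subseteq> set x \<union> set h"
proof (induction h arbitrary: x)
  case Nil then show ?case by simp
next
  case (Cons a h) then show ?case using set_step[of x a] by fastforce
qed

lemma red_set: "set (red g) \<subseteq> set g"
  unfolding red_def using foldl_step_set[of "[]" g] by simp

lemma red_snoc: "red (g @ [a]) = step (red g) a"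
  by (simp add: red_def)

lemma foldl_step_step: "reduced x \<Longrightarrow> foldl step x (step r a) = step (foldl step x r) a"
proof (cases "r \<noteq> [] \<and> last r = inv_letter a")
  case True
  assume x: "reduced x"
  have r: "r = butlast r @ [inv_letter a]" using True by (metis append_butlast_last_id)
  have "foldl step x r = step (foldl step x (butlast r)) (inv_letter a)"
    by (subst r) simp
  moreover have "step (step (foldl step x (butlast r)) (inv_letter a)) a = foldl step x (butlast r)"
    using step_inv[OF foldl_step_reduced[OF x], of "butlast r" "inv_letter a"] by simp
  ultimately show ?thesis using True by (simp add: step_def)
next
  case False
  then have "step r a = r @ [a]" by (auto simp: step_def)
  then show ?thesis by simp
qed

lemma foldl_step_red: "reduced x \<Longrightarrow> foldl step x h = foldl step x (red h)"
proof (induction h rule: rev_induct)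
  case Nil then show ?case by (simp add: red_def)
next
  case (snoc a h)
  then show ?case by (simp add: red_snoc foldl_step_step red_reduced)
qed

lemma foldl_step_append_reduced: "reduced (u @ v) \<Longrightarrow> foldl step u v = u @ v"
proof (induction v arbitrary: u)
  case Nil then show ?case by simp
next
  case (Cons b v)
  have "step u b = u @ [b]"
    using Cons.prems by (auto simp: step_def reduced_append inv_letter_eq_iff)
  then show ?case using Cons by simp
qed

lemma red_of_reduced: "reduced w \<Longrightarrow> red w = w"
  unfolding red_def using foldl_step_append_reduced[of "[]" w] by simp

lemma cancel_rev_Nil: "cancel (rev x) [] = x"
  by (cases "rev x") auto

lemma wmul_foldl: "reduced x \<Longrightarrow> reduced y \<Longrightarrow> wmul x y = foldl step x y"
proof (induction y arbitrary: x)
  case Nil then show ?case by (simp add: wmul_def cancel_rev_Nil)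
next
  case (Cons b ys)
  show ?case
  proof (cases x rule: rev_cases)
    case Nil
    then show ?thesis using Cons.prems foldl_step_append_reduced[of "[]" "b # ys"]
      by (simp add: wmul_def)
  next
    case (snoc x' c)
    have ys: "reduced ys" using Cons.prems(2) by (simp add: reduced_Cons)
    show ?thesis
    proof (cases "b = inv_letter c")
      case True
      have "reduced x'" using Cons.prems(1) snoc by (simp add: reduced_append)
      then show ?thesis using True snoc Cons.IH[of x'] ys
        by (simp add: wmul_def step_def)
    next
      case False
      have "reduced (x @ b # ys)" using Cons.prems False snoc
        by (simp add: reduced_append inv_letter_eq_iff)
      then have "foldl step (x @ [b]) ys = x @ b # ys"
        using foldl_step_append_reduced[of "x @ [b]" ys] by simp
      moreover have "step x b = x @ [b]" using False snoc by (auto simp: step_def inv_letter_eq_iff)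
      ultimately show ?thesis using False snoc by (simp add: wmul_def)
    qed
  qed
qed

lemma red_append: "red (u @ v) = wmul (red u) (red v)"
proof -
  have "red (u @ v) = foldl step (red u) v" by (simp add: red_def)
  also have "\<dots> = foldl step (red u) (red v)" by (rule foldl_step_red[OF red_reduced])
  also have "\<dots> = wmul (red u) (red v)" by (rule wmul_foldl[symmetric]; rule red_reduced)
  finally show ?thesis .
qed


definition Ls :: "'b set \<Rightarrow> nat \<Rightarrow> 'b list set" where
  "Ls L m = {g. set g \<subseteq> L \<and> length g = m}"

lemma Ls_finite: "finite L \<Longrightarrow> finite (Ls L m)"
  unfolding Ls_def by (rule finite_lists_length_eq)

lemma Ls_card: "finite L \<Longrightarrow> card (Ls L m) = card L ^ m"
  unfolding Ls_def by (rule card_lists_length_eq)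

lemma Ls_split:
  assumes "finite L"
  shows "(\<Sum>g\<in>Ls L (a+b). F g) = (\<Sum>u\<in>Ls L a. \<Sum>v\<in>Ls L b. F (u @ v))"
proof -
  have inj: "inj_on (\<lambda>(u,v). u @ v) (Ls L a \<times> Ls L b)"
    by (auto simp: inj_on_def Ls_def)
  have img: "(\<lambda>(u,v). u @ v) ` (Ls L a \<times> Ls L b) = Ls L (a+b)"
  proof
    show "(\<lambda>(u,v). u @ v) ` (Ls L a \<times> Ls L b) \<subseteq> Ls L (a+b)" by (auto simp: Ls_def)
  next
    show "Ls L (a+b) \<subseteq> (\<lambda>(u,v). u @ v) ` (Ls L a \<times> Ls L b)"
    proof
      fix g assume g: "g \<in> Ls L (a+b)"
      have "(take a g, drop a g) \<in> Ls L a \<times> Ls L b" using g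
        by (auto simp: Ls_def dest: in_set_takeD in_set_dropD)
      then show "g \<in> (\<lambda>(u,v). u @ v) ` (Ls L a \<times> Ls L b)"
        by (intro image_eqI[of _ _ "(take a g, drop a g)"]) auto
    qed
  qed
  have "(\<Sum>u\<in>Ls L a. \<Sum>v\<in>Ls L b. F (u @ v)) = (\<Sum>(u,v)\<in>Ls L a \<times> Ls L b. F (u @ v))"
    by (simp add: sum.cartesian_product)
  also have "\<dots> = (\<Sum>p\<in>Ls L a \<times> Ls L b. F ((\<lambda>(u,v). u @ v) p))"
    by (intro sum.cong) auto
  also have "\<dots> = (\<Sum>g\<in>Ls L (a+b). F g)"
    using sum.reindex[OF inj, of F] img by simp
  finally show ?thesis by simp
qed

lemma Ls_1: "Ls L 1 = (\<lambda>a. [a]) ` L"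
  by (auto simp: Ls_def length_Suc_conv)

lemma Ls_sum_1: "(\<Sum>g\<in>Ls L 1. F g) = (\<Sum>a\<in>L. F [a])"
  unfolding Ls_1 by (subst sum.reindex) (auto simp: inj_on_def)

lemma Ls_sum_Suc0: "(\<Sum>g\<in>Ls L (Suc 0). F g) = (\<Sum>a\<in>L. F [a])"
  using Ls_sum_1 by simp

lemma Ls_0: "Ls L 0 = {[]}"
  by (auto simp: Ls_def)

definition hits :: "('a \<times> bool) list set \<Rightarrow> nat \<Rightarrow> ('a \<times> bool) list \<Rightarrow> nat set" where
  "hits S n g = {t \<in> {1..n}. red (take t g) \<in> S}"

lemma hits_finite: "finite (hits S n g)"
  by (simp add: hits_def)

lemma hits_append: "length u \<ge> n \<Longrightarrow> hits S n (u @ v) = hits S n u"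
  by (auto simp: hits_def)

lemma first_hit_pair:
  assumes pf: "product_free S" and ne: "hits S n g \<noteq> {}"
  shows "card (hits S n g) + card (hits S n (drop (Min (hits S n g)) g)) \<le> n + 1"
proof -
  define H where "H = hits S n g"
  define J where "J = Min H"
  define H' where "H' = hits S n (drop J g)"
  have fin: "finite H" by (simp add: H_def hits_finite)
  have JH: "J \<in> H" using fin ne by (simp add: J_def H_def)
  then have J1: "1 \<le> J" "J \<le> n" and JS: "red (take J g) \<in> S" by (auto simp: H_def hits_def)
  have Jmin: "\<And>t. t \<in> H \<Longrightarrow> J \<le> t" using fin by (simp add: J_def)
  define A1 where "A1 = H - {J}"
  define A2 where "A2 = (\<lambda>s. J + s) ` H'"
  have A1sub: "A1 \<subseteq> {J+1..J+n}"
  proof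
    fix t assume "t \<in> A1"
    then have "t \<in> H" "t \<noteq> J" by (auto simp: A1_def)
    then show "t \<in> {J+1..J+n}" using Jmin[of t] by (auto simp: H_def hits_def)
  qed
  have A2sub: "A2 \<subseteq> {J+1..J+n}" by (auto simp: A2_def H'_def hits_def)
  have disj: "A1 \<inter> A2 = {}"
  proof (rule ccontr)
    assume "A1 \<inter> A2 \<noteq> {}"
    then obtain s where s: "s \<in> H'" "J + s \<in> H" by (auto simp: A1_def A2_def)
    have "take (J + s) g = take J g @ take s (drop J g)" by (simp add: take_add)
    then have "red (take (J+s) g) = wmul (red (take J g)) (red (take s (drop J g)))"
      by (simp add: red_append)
    moreover have "red (take (J+s) g) \<in> S" using s(2) by (simp add: H_def hits_def)
    moreover have "red (take s (drop J g)) \<in> S" using s(1) by (simp add: H'_def hits_def)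
    ultimately show False using pf JS unfolding product_free_def by blast
  qed
  have "card A1 + card A2 = card (A1 \<union> A2)"
    using disj A1sub A2sub by (intro card_Un_disjoint[symmetric]) (auto intro: finite_subset)
  also have "\<dots> \<le> card {J+1..J+n}" using A1sub A2sub by (intro card_mono) auto
  also have "\<dots> = n" by simp
  finally have "card A1 + card A2 \<le> n" .
  moreover have "card A2 = card H'" unfolding A2_def by (rule card_image) (simp add: inj_on_def)
  moreover have "card H = card A1 + 1"
  proof -
    have c1: "card A1 = card H - 1" unfolding A1_def using JH fin by (simp add: card_Diff_singleton)
    have c2: "card H > 0" using JH fin card_gt_0_iff by blast
    show ?thesis using c1 c2 by linarith
  qed
  ultimately show ?thesis by (simp add: H_def[symmetric] J_def[symmetric] H'_def[symmetric])
qed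

definition Ej :: "('a \<times> bool) list set \<Rightarrow> nat \<Rightarrow> ('a \<times> bool) list \<Rightarrow> bool" where
  "Ej S j u = (red u \<in> S \<and> (\<forall>t\<in>{1..<j}. red (take t u) \<notin> S))"

lemma first_hit_char:
  assumes "length u = j" "j \<in> {1..n}"
  shows "(hits S n (u @ v) \<noteq> {} \<and> Min (hits S n (u @ v)) = j) = Ej S j u"
proof -
  have tk: "\<And>t. t \<le> j \<Longrightarrow> take t (u @ v) = take t u" using assms(1) by simp
  have fin: "finite (hits S n (u @ v))" by (rule hits_finite)
  show ?thesis
  proof
    assume h: "hits S n (u @ v) \<noteq> {} \<and> Min (hits S n (u @ v)) = j"
    then have jin: "j \<in> hits S n (u @ v)" using fin Min_in by metis
    have mn: "\<And>t. t \<in> hits S n (u @ v) \<Longrightarrow> j \<le> t" using h fin by (metis Min_le)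
    show "Ej S j u" unfolding Ej_def
    proof
      show "red u \<in> S" using jin tk[of j] assms(1) by (simp add: hits_def)
      show "\<forall>t\<in>{1..<j}. red (take t u) \<notin> S"
      proof
        fix t assume t: "t \<in> {1..<j}"
        show "red (take t u) \<notin> S"
        proof
          assume "red (take t u) \<in> S"
          moreover have "take t (u @ v) = take t u" using t assms(1) by simp
          ultimately have "t \<in> hits S n (u @ v)" using t assms(2) by (simp add: hits_def del: take_append)
          then show False using mn[of t] t by simp
        qed
      qed
    qed
  next
    assume e: "Ej S j u"
    have jin: "j \<in> hits S n (u @ v)" using e assms tk[of j] by (simp add: hits_def Ej_def)
    have "\<And>t. t \<in> hits S n (u @ v) \<Longrightarrow> j \<le> t"
    proof (rule ccontr)
      fix t assume t: "t \<in> hits S n (u @ v)" "\<not> j \<le> t"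
      then have "t \<in> {1..<j}" "red (take t u) \<in> S" using tk[of t] by (auto simp: hits_def)
      then show False using e by (auto simp: Ej_def)
    qed
    then show "hits S n (u @ v) \<noteq> {} \<and> Min (hits S n (u @ v)) = j"
      using jin fin by (metis Min_eqI empty_iff)
  qed
qed

lemma first_hit_decomp:
  assumes fin: "finite L" and mn: "n \<le> m"
  shows "(\<Sum>g\<in>Ls L m. (if hits S n g \<noteq> {} then F (Min (hits S n g)) (drop (Min (hits S n g)) g) else 0::real))
       = (\<Sum>j\<in>{1..n}. \<Sum>u\<in>Ls L j. (if Ej S j u then (\<Sum>v\<in>Ls L (m - j). F j v) else 0))"
proof -
  have "\<And>g. (if hits S n g \<noteq> {} then F (Min (hits S n g)) (drop (Min (hits S n g)) g) else 0::real)
      = (\<Sum>j\<in>{1..n}. if hits S n g \<noteq> {} \<and> Min (hits S n g) = j then F j (drop j g) else 0)"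
  proof -
    fix g
    show "?thesis g"
    proof (cases "hits S n g \<noteq> {}")
      case True
      have "Min (hits S n g) \<in> hits S n g" using True hits_finite Min_in by metis
      then have "Min (hits S n g) \<in> {1..n}" by (auto simp: hits_def)
      then show ?thesis using True
        by (simp add: sum.delta[OF finite_atLeastAtMost] cong: if_cong)
    next
      case False then show ?thesis by simp
    qed
  qed
  then have "(\<Sum>g\<in>Ls L m. (if hits S n g \<noteq> {} then F (Min (hits S n g)) (drop (Min (hits S n g)) g) else 0::real))
      = (\<Sum>g\<in>Ls L m. \<Sum>j\<in>{1..n}. if hits S n g \<noteq> {} \<and> Min (hits S n g) = j then F j (drop j g) else 0)"
    by (intro sum.cong refl) 
  also have "\<dots> = (\<Sum>j\<in>{1..n}. \<Sum>g\<in>Ls L m. if hits S n g \<noteq> {} \<and> Min (hits S n g) = j then F j (drop j g) else 0)"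
    by (rule sum.swap)
  also have "\<dots> = (\<Sum>j\<in>{1..n}. \<Sum>u\<in>Ls L j. (if Ej S j u then (\<Sum>v\<in>Ls L (m - j). F j v) else 0))"
  proof (rule sum.cong[OF refl])
    fix j assume j: "j \<in> {1..n}"
    have mj: "m = j + (m - j)" using j mn by simp
    have "(\<Sum>g\<in>Ls L m. if hits S n g \<noteq> {} \<and> Min (hits S n g) = j then F j (drop j g) else 0)
        = (\<Sum>u\<in>Ls L j. \<Sum>v\<in>Ls L (m-j). if hits S n (u@v) \<noteq> {} \<and> Min (hits S n (u@v)) = j then F j (drop j (u@v)) else 0)"
      by (subst mj) (rule Ls_split[OF fin])
    also have "\<dots> = (\<Sum>u\<in>Ls L j. \<Sum>v\<in>Ls L (m-j). if Ej S j u then F j v else 0)"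
    proof (rule sum.cong[OF refl], rule sum.cong[OF refl])
      fix u v assume u: "u \<in> Ls L j"
      then have lu: "length u = j" by (simp add: Ls_def)
      show "(if hits S n (u@v) \<noteq> {} \<and> Min (hits S n (u@v)) = j then F j (drop j (u@v)) else 0)
          = (if Ej S j u then F j v else 0)"
        using first_hit_char[OF lu j, of S v] lu by simp
    qed
    also have "\<dots> = (\<Sum>u\<in>Ls L j. (if Ej S j u then (\<Sum>v\<in>Ls L (m - j). F j v) else 0))"
      by (intro sum.cong refl) simp
    finally show "(\<Sum>g\<in>Ls L m. if hits S n g \<noteq> {} \<and> Min (hits S n g) = j then F j (drop j g) else 0)
        = (\<Sum>u\<in>Ls L j. (if Ej S j u then (\<Sum>v\<in>Ls L (m - j). F j v) else 0))" .
  qed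
  finally show ?thesis .
qed

lemma first_hit_bound:
  assumes fin: "finite L" and ne: "L \<noteq> {}" and pf: "product_free S"
  shows "(\<Sum>g\<in>Ls L n. real (card (hits S n g))) \<le> real (card L) ^ n * (real n + 1) / 2"
proof -
  define K where "K = real (card L)"
  have Kpos: "K > 0" using fin ne by (simp add: K_def card_gt_0_iff)
  define X where "X = (\<Sum>h\<in>Ls L n. real (card (hits S n h)))"
  have sumLs: "\<And>m. (\<Sum>v\<in>Ls L (n + m). real (card (hits S n v))) = K ^ m * X"
  proof -
    fix m
    have "(\<Sum>v\<in>Ls L (n + m). real (card (hits S n v)))
        = (\<Sum>u\<in>Ls L n. \<Sum>v\<in>Ls L m. real (card (hits S n (u @ v))))" by (rule Ls_split[OF fin])
    also have "\<dots> = (\<Sum>u\<in>Ls L n. \<Sum>v\<in>Ls L m. real (card (hits S n u)))"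
      by (intro sum.cong refl) (simp add: hits_append Ls_def)
    also have "\<dots> = K ^ m * X" by (simp add: X_def K_def Ls_card[OF fin] sum_distrib_left)
    finally show "?thesis m" .
  qed
  define Q where "Q = (\<Sum>j\<in>{1..n}. \<Sum>u\<in>Ls L j. (if Ej S j u then K ^ (n - j) else 0))"
  have Qn: "(\<Sum>g\<in>Ls L n. (if hits S n g \<noteq> {} then 1 else 0::real)) = Q"
  proof -
    have "(\<Sum>g\<in>Ls L n. (if hits S n g \<noteq> {} then (\<lambda>j v. 1::real) (Min (hits S n g)) (drop (Min (hits S n g)) g) else 0::real))
        = (\<Sum>j\<in>{1..n}. \<Sum>u\<in>Ls L j. (if Ej S j u then (\<Sum>v\<in>Ls L (n - j). (1::real)) else 0))"
      by (rule first_hit_decomp[OF fin order_refl])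
    also have "\<dots> = Q" unfolding Q_def by (intro sum.cong refl) (simp add: Ls_card[OF fin] K_def)
    finally show ?thesis by simp
  qed
  have Q0: "0 \<le> Q" unfolding Q_def using Kpos by (intro sum_nonneg) auto
  have Q1: "Q \<le> K ^ n"
  proof -
    have "(\<Sum>g\<in>Ls L n. (if hits S n g \<noteq> {} then 1 else 0::real)) \<le> (\<Sum>g\<in>Ls L n. 1)"
      by (intro sum_mono) auto
    then show ?thesis using Qn by (simp add: Ls_card[OF fin] K_def)
  qed
  have Q2: "(\<Sum>g\<in>Ls L (n+n). (if hits S n g \<noteq> {} then real n + 1 - real (card (hits S n (drop (Min (hits S n g)) g))) else 0))
          = Q * (K ^ n * (real n + 1) - X)"
  proof -
    have "(\<Sum>g\<in>Ls L (n+n). (if hits S n g \<noteq> {} then (\<lambda>j v. real n + 1 - real (card (hits S n v))) (Min (hits S n g)) (drop (Min (hits S n g)) g) else 0))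
        = (\<Sum>j\<in>{1..n}. \<Sum>u\<in>Ls L j. (if Ej S j u then (\<Sum>v\<in>Ls L (n + n - j). real n + 1 - real (card (hits S n v))) else 0))"
      by (rule first_hit_decomp[OF fin]) simp
    also have "\<dots> = (\<Sum>j\<in>{1..n}. \<Sum>u\<in>Ls L j. (if Ej S j u then K ^ (n - j) * (K ^ n * (real n + 1) - X) else 0))"
    proof (intro sum.cong refl)
      fix j u assume j: "j \<in> {1..n}"
      have e: "n + n - j = n + (n - j)" using j by simp
      have "(\<Sum>v\<in>Ls L (n + n - j). real n + 1 - real (card (hits S n v)))
          = K ^ (n + (n - j)) * (real n + 1) - K ^ (n - j) * X"
        using sumLs[of "n - j"] by (simp add: e sum_subtractf Ls_card[OF fin] K_def)
      also have "\<dots> = K ^ (n - j) * (K ^ n * (real n + 1) - X)" by (simp add: power_add algebra_simps)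
      finally show "(if Ej S j u then (\<Sum>v\<in>Ls L (n + n - j). real n + 1 - real (card (hits S n v))) else 0)
          = (if Ej S j u then K ^ (n - j) * (K ^ n * (real n + 1) - X) else 0)" by simp
    qed
    also have "\<dots> = Q * (K ^ n * (real n + 1) - X)"
      unfolding Q_def sum_distrib_right by (intro sum.cong refl) simp
    finally show ?thesis by simp
  qed
  have "K ^ n * X = (\<Sum>g\<in>Ls L (n+n). real (card (hits S n g)))" using sumLs[of n] by simp
  also have "\<dots> \<le> (\<Sum>g\<in>Ls L (n+n). (if hits S n g \<noteq> {} then real n + 1 - real (card (hits S n (drop (Min (hits S n g)) g))) else 0))"
  proof (rule sum_mono)
    fix g
    show "real (card (hits S n g)) \<le> (if hits S n g \<noteq> {} then real n + 1 - real (card (hits S n (drop (Min (hits S n g)) g))) else 0)"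
    proof (cases "hits S n g = {}")
      case False
      then show ?thesis using first_hit_pair[OF pf False] by simp
    qed simp
  qed
  also have "\<dots> = Q * (K ^ n * (real n + 1) - X)" by (rule Q2)
  finally have main: "K ^ n * X \<le> Q * (K ^ n * (real n + 1) - X)" .
  have Kn: "K ^ n > 0" using Kpos by simp
  have "2 * X \<le> K ^ n * (real n + 1)"
  proof (cases "K ^ n * (real n + 1) - X \<le> 0")
    case True
    then have "K ^ n * X \<le> 0" using main Q0 by (meson mult_nonneg_nonpos order_trans)
    then have "X \<le> 0" using Kn by (simp add: mult_le_0_iff)
    then show ?thesis using Kn by (smt (verit) mult_nonneg_nonneg of_nat_0_le_iff)
  next
    case False
    then have "Q * (K ^ n * (real n + 1) - X) \<le> K ^ n * (K ^ n * (real n + 1) - X)"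
      using Q1 by (intro mult_right_mono) auto
    then have "K ^ n * X \<le> K ^ n * (K ^ n * (real n + 1) - X)" using main by linarith
    then have "X \<le> K ^ n * (real n + 1) - X" using Kn by simp
    then show ?thesis by simp
  qed
  then show ?thesis by (simp add: X_def K_def)
qed


lemma inv_letter_Sig: "a \<in> A \<times> UNIV \<Longrightarrow> inv_letter a \<in> A \<times> UNIV"
  by (auto simp: inv_letter_def)

lemma card_Sig: "finite A \<Longrightarrow> card (A \<times> (UNIV::bool set)) = 2 * card A"
  by (simp add: card_cartesian_product)

lemma red_free: "set g \<subseteq> A \<times> UNIV \<Longrightarrow> red g \<in> free_group A"
  using red_set[of g] red_reduced[of g] by (auto simp: free_group_def)

lemma step_free: "w \<in> free_group A \<Longrightarrow> a \<in> A \<times> UNIV \<Longrightarrow> step w a \<in> free_group A"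
  using set_step[of w a] step_reduced[of w a] by (auto simp: free_group_def)

lemma length_red: "length (red g) \<le> length g"
proof (induction g rule: rev_induct)
  case Nil then show ?case by (simp add: red_def)
next
  case (snoc a g) then show ?case by (auto simp: red_snoc length_step)
qed

lemma sum_step_len:
  fixes h :: "nat \<Rightarrow> real"
  assumes fin: "finite A" and r: "r \<in> free_group A"
  shows "(\<Sum>a\<in>A \<times> UNIV. h (length (step r a))) =
    (if r = [] then real (card (A \<times> (UNIV::bool set))) * h 1
     else h (length r - 1) + (real (card (A \<times> (UNIV::bool set))) - 1) * h (length r + 1))"
proof (cases "r = []")
  case True
  then show ?thesis by (simp add: step_def)
next
  case False
  define b where "b = inv_letter (last r)"
  have lr: "last r \<in> A \<times> UNIV" using r False by (auto simp: free_group_def)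
  then have bS: "b \<in> A \<times> UNIV" by (simp add: b_def inv_letter_Sig)
  have finS: "finite (A \<times> (UNIV::bool set))" using fin by simp
  have "(\<Sum>a\<in>A \<times> UNIV. h (length (step r a))) = h (length (step r b)) + (\<Sum>a\<in>(A \<times> UNIV) - {b}. h (length (step r a)))"
    using sum.remove[OF finS bS] by simp
  also have "h (length (step r b)) = h (length r - 1)" using False by (simp add: step_def b_def)
  also have "(\<Sum>a\<in>(A \<times> UNIV) - {b}. h (length (step r a))) = (\<Sum>a\<in>(A \<times> UNIV) - {b}. h (length r + 1))"
  proof (rule sum.cong[OF refl])
    fix a assume "a \<in> (A \<times> UNIV) - {b}"
    then have "last r \<noteq> inv_letter a" by (auto simp: b_def inv_letter_eq_iff)
    then show "h (length (step r a)) = h (length r + 1)" by (simp add: step_def)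
  qed
  also have "\<dots> = real (card ((A \<times> UNIV) - {b})) * h (length r + 1)" by simp
  also have "real (card ((A \<times> UNIV) - {b})) = real (card (A \<times> (UNIV::bool set))) - 1"
  proof -
    have cpos: "card (A \<times> (UNIV::bool set)) \<ge> 1" using bS finS
      by (metis One_nat_def Suc_leI card_gt_0_iff empty_iff)
    then show ?thesis using bS finS by (simp add: card_Diff_singleton of_nat_diff)
  qed
  finally show ?thesis using False by simp
qed

fun fc :: "real \<Rightarrow> nat \<Rightarrow> nat \<Rightarrow> real" where
  "fc N 0 l = (if l = 0 then 1 else 0)"
| "fc N (Suc t) l = (if l = 0 then N * fc N t 1 else fc N t (l - 1) + (N - 1) * fc N t (l + 1))"

lemma step_eq_iff: "reduced r \<Longrightarrow> reduced w \<Longrightarrow> (step r a = w) = (r = step w (inv_letter a))"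
  using step_inv[of r a] step_inv[of w "inv_letter a"] by auto

lemma uniform_count:
  assumes fin: "finite A" and w: "w \<in> free_group A"
  shows "(\<Sum>g\<in>Ls (A \<times> UNIV) t. if red g = w then 1 else 0::real) = fc (real (card (A \<times> (UNIV::bool set)))) t (length w)"
  using w
proof (induction t arbitrary: w)
  case 0
  then show ?case by (simp add: Ls_0 red_def)
next
  case (Suc t)
  define N where "N = real (card (A \<times> (UNIV::bool set)))"
  have finS: "finite (A \<times> (UNIV::bool set))" using fin by simp
  have wr: "reduced w" using Suc.prems by (simp add: free_group_def)
  have "(\<Sum>g\<in>Ls (A \<times> UNIV) (Suc t). if red g = w then 1 else 0::real)
      = (\<Sum>u\<in>Ls (A \<times> UNIV) t. \<Sum>v\<in>Ls (A \<times> UNIV) 1. if red (u @ v) = w then 1 else 0::real)"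
    using Ls_split[OF finS, of "\<lambda>g. if red g = w then 1 else 0::real" t 1] by simp
  also have "\<dots> = (\<Sum>u\<in>Ls (A \<times> UNIV) t. \<Sum>a\<in>A \<times> UNIV. if red u = step w (inv_letter a) then 1 else 0::real)"
    by (intro sum.cong refl) (simp add: Ls_sum_Suc0 red_snoc step_eq_iff[OF red_reduced wr])
  also have "\<dots> = (\<Sum>a\<in>A \<times> UNIV. \<Sum>u\<in>Ls (A \<times> UNIV) t. if red u = step w (inv_letter a) then 1 else 0::real)"
    by (rule sum.swap)
  also have "\<dots> = (\<Sum>a\<in>A \<times> UNIV. fc N t (length (step w (inv_letter a))))"
    by (intro sum.cong refl) (simp add: Suc.IH step_free[OF Suc.prems] inv_letter_Sig N_def)
  also have "\<dots> = (\<Sum>a\<in>A \<times> UNIV. fc N t (length (step w a)))"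
    by (rule sum.reindex_bij_witness[where i=inv_letter and j=inv_letter]) (auto simp: inv_letter_Sig)
  also have "\<dots> = fc N (Suc t) (length w)"
    using sum_step_len[OF fin Suc.prems, of "fc N t"] by (simp add: N_def)
  finally show ?case by (simp add: N_def)
qed

lemma count_subset_layer:
  assumes fin: "finite A" and B: "B \<subseteq> layer A l"
  shows "(\<Sum>g\<in>Ls (A \<times> UNIV) t. if red g \<in> B then 1 else 0::real) = real (card B) * fc (real (card (A \<times> (UNIV::bool set)))) t l"
proof -
  have finB: "finite B"
  proof (rule finite_subset)
    show "B \<subseteq> Ls (A \<times> UNIV) l" using B by (auto simp: layer_def free_group_def Ls_def)
    show "finite (Ls (A \<times> (UNIV::bool set)) l)" using fin by (simp add: Ls_finite)
  qed
  have "(\<Sum>g\<in>Ls (A \<times> UNIV) t. if red g \<in> B then 1 else 0::real)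
      = (\<Sum>g\<in>Ls (A \<times> UNIV) t. \<Sum>w\<in>B. if red g = w then 1 else 0::real)"
    by (intro sum.cong refl) (simp add: sum.delta'[OF finB])
  also have "\<dots> = (\<Sum>w\<in>B. \<Sum>g\<in>Ls (A \<times> UNIV) t. if red g = w then 1 else 0::real)"
    by (rule sum.swap)
  also have "\<dots> = (\<Sum>w\<in>B. fc (real (card (A \<times> (UNIV::bool set)))) t l)"
  proof (rule sum.cong[OF refl])
    fix w assume "w \<in> B"
    then have "w \<in> free_group A" "length w = l" using B by (auto simp: layer_def)
    then show "(\<Sum>g\<in>Ls (A \<times> UNIV) t. if red g = w then 1 else 0::real) = fc (real (card (A \<times> (UNIV::bool set)))) t l"
      using uniform_count[OF fin] by simp
  qed
  finally show ?thesis by simp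
qed


definition NN :: "'a set \<Rightarrow> real" where "NN A = real (card (A \<times> (UNIV::bool set)))"

definition Cnt :: "'a set \<Rightarrow> nat \<Rightarrow> nat \<Rightarrow> real" where
  "Cnt A t l = (\<Sum>g\<in>Ls (A \<times> UNIV) t. if length (red g) = l then 1 else 0)"

definition Pr :: "'a set \<Rightarrow> nat \<Rightarrow> nat \<Rightarrow> real" where
  "Pr A t l = Cnt A t l / NN A ^ t"

lemma Cnt_nonneg: "Cnt A t l \<ge> 0"
  unfolding Cnt_def by (intro sum_nonneg) auto

lemma NN_pos: "finite A \<Longrightarrow> A \<noteq> {} \<Longrightarrow> NN A > 0"
  by (simp add: NN_def card_Sig card_gt_0_iff)

lemma Pr_nonneg: "finite A \<Longrightarrow> A \<noteq> {} \<Longrightarrow> Pr A t l \<ge> 0"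
  unfolding Pr_def using Cnt_nonneg[of A t l] NN_pos[of A] by (intro divide_nonneg_pos) auto

lemma Cnt_Suc:
  assumes fin: "finite A"
  shows "Cnt A (Suc t) l = (\<Sum>u\<in>Ls (A \<times> (UNIV::bool set)) t.
     (if red u = [] then NN A * (if 1 = l then 1 else 0)
      else (if length (red u) - 1 = l then 1 else 0) + (NN A - 1) * (if length (red u) + 1 = l then 1 else 0)))"
proof -
  have finS: "finite (A \<times> (UNIV::bool set))" using fin by simp
  have "Cnt A (Suc t) l = (\<Sum>u\<in>Ls (A \<times> UNIV) t. \<Sum>v\<in>Ls (A \<times> UNIV) 1. if length (red (u @ v)) = l then 1 else 0)"
    unfolding Cnt_def using Ls_split[OF finS, of "\<lambda>g. if length (red g) = l then 1 else 0::real" t 1] by simp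
  also have "\<dots> = (\<Sum>u\<in>Ls (A \<times> UNIV) t. \<Sum>a\<in>A \<times> UNIV. (\<lambda>m. if m = l then 1 else 0::real) (length (step (red u) a)))"
    by (intro sum.cong refl) (simp add: Ls_sum_Suc0 red_snoc)
  also have "\<dots> = (\<Sum>u\<in>Ls (A \<times> UNIV) t.
     (if red u = [] then NN A * (if 1 = l then 1 else 0)
      else (if length (red u) - 1 = l then 1 else 0) + (NN A - 1) * (if length (red u) + 1 = l then 1 else 0)))"
  proof (intro sum.cong refl)
    fix u assume "u \<in> Ls (A \<times> (UNIV::bool set)) t"
    then have "red u \<in> free_group A" by (intro red_free) (simp add: Ls_def)
    then show "(\<Sum>a\<in>A \<times> UNIV. (\<lambda>m. if m = l then 1 else 0::real) (length (step (red u) a))) =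
     (if red u = [] then NN A * (if 1 = l then 1 else 0)
      else (if length (red u) - 1 = l then 1 else 0) + (NN A - 1) * (if length (red u) + 1 = l then 1 else 0))"
      using sum_step_len[OF fin, of "red u" "\<lambda>m. if m = l then 1 else 0"] by (simp add: NN_def)
  qed
  finally show ?thesis .
qed

lemma Cnt_Suc_0: "finite A \<Longrightarrow> Cnt A (Suc t) 0 = Cnt A t 1"
  apply (subst Cnt_Suc, assumption)
  unfolding Cnt_def by (intro sum.cong refl) (auto simp: le_Suc_eq)

lemma Cnt_Suc_1: "finite A \<Longrightarrow> Cnt A (Suc t) (Suc 0) = NN A * Cnt A t 0 + Cnt A t 2"
  apply (subst Cnt_Suc, assumption)
  unfolding Cnt_def sum_distrib_left sum.distrib[symmetric] by (intro sum.cong refl) auto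

lemma Cnt_Suc_ge2: "finite A \<Longrightarrow> l \<ge> 2 \<Longrightarrow> Cnt A (Suc t) l = Cnt A t (l + 1) + (NN A - 1) * Cnt A t (l - 1)"
  apply (subst Cnt_Suc, assumption)
  unfolding Cnt_def sum_distrib_left sum.distrib[symmetric] by (intro sum.cong refl) auto

lemma Cnt_0: "Cnt A 0 l = (if l = 0 then 1 else 0)"
  by (simp add: Cnt_def Ls_0 red_def)

lemma Pr_0: "Pr A 0 l = (if l = 0 then 1 else 0)"
  by (simp add: Pr_def Cnt_0)

lemma Pr_Suc_0: "finite A \<Longrightarrow> A \<noteq> {} \<Longrightarrow> Pr A (Suc t) 0 = Pr A t 1 / NN A"
  by (simp add: Pr_def Cnt_Suc_0)

lemma Pr_Suc_1: "finite A \<Longrightarrow> A \<noteq> {} \<Longrightarrow> Pr A (Suc t) (Suc 0) = Pr A t 0 + Pr A t 2 / NN A"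
  using NN_pos[of A] by (simp add: Pr_def Cnt_Suc_1 field_simps)

lemma Pr_Suc_ge2: "finite A \<Longrightarrow> A \<noteq> {} \<Longrightarrow> l \<ge> 2 \<Longrightarrow>
    Pr A (Suc t) l = Pr A t (l + 1) / NN A + (NN A - 1) / NN A * Pr A t (l - 1)"
  using NN_pos[of A] by (simp add: Pr_def Cnt_Suc_ge2 field_simps)

definition gam :: "'a set \<Rightarrow> real" where "gam A = NN A / (NN A - 2)"

definition hb :: "'a set \<Rightarrow> nat \<Rightarrow> real" where
  "hb A l = (if l = 0 then 1 + gam A / NN A else gam A)"

lemma green_bound:
  assumes fin: "finite A" and two: "card A \<ge> 2"
  shows "(\<Sum>t\<le>n. Pr A t l) \<le> hb A l"
proof -
  have ne: "A \<noteq> {}" using two by auto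
  have N4: "NN A \<ge> 4" using two fin by (simp add: NN_def card_Sig)
  have gpos: "gam A > 0" using N4 by (simp add: gam_def)
  have gid: "1 + 2 * gam A / NN A = gam A" using N4 by (simp add: gam_def field_simps)
  have gid2: "gam A / NN A + (NN A - 1) / NN A * gam A = gam A" using N4 by (simp add: field_simps)
  show ?thesis
  proof (induction n arbitrary: l)
    case 0
    then show ?case using gpos N4 by (simp add: Pr_0 hb_def)
  next
    case (Suc n)
    have split: "(\<Sum>t\<le>Suc n. Pr A t l) = Pr A 0 l + (\<Sum>t\<le>n. Pr A (Suc t) l)"
      by (rule sum.atMost_Suc_shift)
    show ?case
    proof (cases "l = 0")
      case True
      have "(\<Sum>t\<le>n. Pr A (Suc t) l) = (\<Sum>t\<le>n. Pr A t 1) / NN A"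
        using True by (simp add: Pr_Suc_0[OF fin ne] sum_divide_distrib)
      also have "\<dots> \<le> gam A / NN A" using Suc.IH[of 1] N4 by (simp add: hb_def divide_right_mono)
      finally show ?thesis using split True by (simp add: Pr_0 hb_def)
    next
      case False
      show ?thesis
      proof (cases "l = 1")
        case True
        have "(\<Sum>t\<le>n. Pr A (Suc t) l) = (\<Sum>t\<le>n. Pr A t 0) + (\<Sum>t\<le>n. Pr A t 2) / NN A"
          using True by (simp add: Pr_Suc_1[OF fin ne] sum.distrib sum_divide_distrib)
        also have "\<dots> \<le> (1 + gam A / NN A) + gam A / NN A"
          using Suc.IH[of 0] Suc.IH[of 2] N4 by (intro add_mono) (auto simp: hb_def divide_right_mono)
        finally show ?thesis using split True gid by (simp add: Pr_0 hb_def)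
      next
        case False
        then have l2: "l \<ge> 2" using \<open>l \<noteq> 0\<close> by simp
        have "(\<Sum>t\<le>n. Pr A (Suc t) l) = (\<Sum>t\<le>n. Pr A t (l+1)) / NN A + (NN A - 1) / NN A * (\<Sum>t\<le>n. Pr A t (l - 1))"
          using l2 by (simp add: Pr_Suc_ge2[OF fin ne] sum.distrib sum_divide_distrib sum_distrib_left)
        also have "\<dots> \<le> gam A / NN A + (NN A - 1) / NN A * gam A"
          using Suc.IH[of "l+1"] Suc.IH[of "l-1"] N4 l2
          by (intro add_mono mult_left_mono) (auto simp: hb_def divide_right_mono)
        finally show ?thesis using split l2 gid2 by (simp add: Pr_0 hb_def)
      qed
    qed
  qed
qed


definition Ez :: "'a set \<Rightarrow> nat \<Rightarrow> real \<Rightarrow> real" where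
  "Ez A t z = (\<Sum>g\<in>Ls (A \<times> (UNIV::bool set)) t. z ^ length (red g))"

lemma Ez_Suc:
  assumes fin: "finite A" and z: "z \<ge> 1"
  shows "Ez A (Suc t) z \<le> (1/z + (NN A - 1) * z) * Ez A t z + (z - 1/z) * NN A ^ t"
proof -
  have finS: "finite (A \<times> (UNIV::bool set))" using fin by simp
  have "Ez A (Suc t) z = (\<Sum>u\<in>Ls (A \<times> (UNIV::bool set)) t. \<Sum>a\<in>A \<times> UNIV. (\<lambda>m. z ^ m) (length (step (red u) a)))"
    unfolding Ez_def using Ls_split[OF finS, of "\<lambda>g. z ^ length (red g)" t 1]
    by (simp add: Ls_sum_Suc0 red_snoc)
  also have "\<dots> \<le> (\<Sum>u\<in>Ls (A \<times> (UNIV::bool set)) t. (1/z + (NN A - 1) * z) * z ^ length (red u) + (z - 1/z))"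
  proof (rule sum_mono)
    fix u assume "u \<in> Ls (A \<times> (UNIV::bool set)) t"
    then have rf: "red u \<in> free_group A" by (intro red_free) (simp add: Ls_def)
    have zz: "z - 1/z \<ge> 0" using z mult_mono[OF z z] by (simp add: field_simps)
    show "(\<Sum>a\<in>A \<times> UNIV. (\<lambda>m. z ^ m) (length (step (red u) a))) \<le> (1/z + (NN A - 1) * z) * z ^ length (red u) + (z - 1/z)"
    proof (cases "red u = []")
      case True
      then show ?thesis using sum_step_len[OF fin rf, of "\<lambda>m. z ^ m"] z
        by (simp add: NN_def field_simps)
    next
      case False
      then obtain m where m: "length (red u) = Suc m" by (cases "red u") auto
      have "(\<Sum>a\<in>A \<times> UNIV. (\<lambda>m. z ^ m) (length (step (red u) a))) = z ^ m + (NN A - 1) * z ^ (Suc (Suc m))"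
        using sum_step_len[OF fin rf, of "\<lambda>m. z ^ m"] False m by (simp add: NN_def)
      also have "\<dots> = (1/z + (NN A - 1) * z) * z ^ length (red u)" using m z by (simp add: field_simps)
      finally show ?thesis using zz by simp
    qed
  qed
  also have "\<dots> = (1/z + (NN A - 1) * z) * Ez A t z + (z - 1/z) * NN A ^ t"
    by (simp add: Ez_def sum.distrib sum_distrib_left Ls_card[OF finS] NN_def)
  finally show ?thesis .
qed

lemma Ez_bound:
  assumes fin: "finite A" and ne: "A \<noteq> {}" and z: "z \<ge> 1"
  defines "phi \<equiv> (1/z + (NN A - 1) * z) / NN A"
  defines "c \<equiv> (z - 1/z) / NN A"
  shows "Ez A t z / NN A ^ t \<le> phi ^ t * (1 + real t * c)"
proof (induction t)
  case 0
  then show ?case by (simp add: Ez_def Ls_0 red_def)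
next
  case (Suc t)
  have Npos: "NN A > 0" using NN_pos[OF fin ne] .
  have N1: "NN A \<ge> 1"
  proof -
    have "card (A \<times> (UNIV::bool set)) \<ge> 1" using fin ne by (simp add: card_Sig Suc_leI card_gt_0_iff)
    then show ?thesis by (simp add: NN_def)
  qed
  have c0: "c \<ge> 0" using z Npos mult_mono[OF z z] by (simp add: c_def field_simps)
  have N2: "NN A \<ge> 2"
  proof -
    have "card A \<ge> 1" using fin ne by (simp add: Suc_leI card_gt_0_iff)
    then show ?thesis by (simp add: NN_def card_Sig fin)
  qed
  have phi1: "phi \<ge> 1"
  proof -
    have "(1/z + (NN A - 1) * z) - NN A = ((NN A - 1) * z - 1) * (z - 1) / z" using z by (simp add: field_simps)
    also have "\<dots> \<ge> 0"
    proof -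
      have "1 * 1 \<le> (NN A - 1) * z" using N2 z by (intro mult_mono) auto
      then show ?thesis using z by (intro divide_nonneg_pos mult_nonneg_nonneg) auto
    qed
    finally show ?thesis using Npos by (simp add: phi_def field_simps)
  qed
  have "Ez A (Suc t) z / NN A ^ Suc t \<le> ((1/z + (NN A - 1) * z) * Ez A t z + (z - 1/z) * NN A ^ t) / NN A ^ Suc t"
    using Ez_Suc[OF fin z, of t] Npos by (simp add: divide_right_mono)
  also have "\<dots> = phi * (Ez A t z / NN A ^ t) + c" using Npos by (simp add: phi_def c_def field_simps)
  also have "\<dots> \<le> phi * (phi ^ t * (1 + real t * c)) + c"
    using Suc.IH phi1 by (intro add_mono mult_left_mono) auto
  also have "\<dots> \<le> phi * (phi ^ t * (1 + real t * c)) + phi ^ Suc t * c"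
  proof -
    have "1 \<le> phi ^ Suc t" using phi1 by (rule one_le_power)
    then show ?thesis using c0 by (simp add: mult_le_cancel_right1 del: power_Suc)
  qed
  also have "\<dots> = phi ^ Suc t * (1 + real (Suc t) * c)" by (simp add: algebra_simps)
  finally show ?case .
qed

definition Bt :: "'a set \<Rightarrow> nat \<Rightarrow> nat \<Rightarrow> real" where
  "Bt A t L = (\<Sum>g\<in>Ls (A \<times> (UNIV::bool set)) t. if length (red g) > L then 1 else 0)"

lemma Bt_Ez: "z \<ge> 1 \<Longrightarrow> Bt A t L \<le> Ez A t z / z ^ L"
  unfolding Bt_def Ez_def sum_divide_distrib
proof (rule sum_mono)
  fix g assume z: "z \<ge> 1"
  show "(if length (red g) > L then 1 else 0) \<le> z ^ length (red g) / z ^ L"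
  proof (cases "length (red g) > L")
    case True
    then have "z ^ L \<le> z ^ length (red g)" using z by (intro power_increasing) auto
    then show ?thesis using True z by simp
  qed (use z in simp)
qed

lemma Cnt_Bt: "finite A \<Longrightarrow> (\<Sum>l\<le>L. Cnt A t l) + Bt A t L = NN A ^ t"
proof -
  assume fin: "finite A"
  have finS: "finite (A \<times> (UNIV::bool set))" using fin by simp
  have "(\<Sum>l\<le>L. Cnt A t l) = (\<Sum>g\<in>Ls (A \<times> (UNIV::bool set)) t. \<Sum>l\<le>L. if length (red g) = l then 1 else 0)"
    unfolding Cnt_def by (rule sum.swap)
  then have "(\<Sum>l\<le>L. Cnt A t l) + Bt A t L = (\<Sum>g\<in>Ls (A \<times> (UNIV::bool set)) t. (\<Sum>l\<le>L. if length (red g) = l then 1 else 0) + (if length (red g) > L then 1 else 0))"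
    unfolding Bt_def by (simp add: sum.distrib)
  also have "\<dots> = (\<Sum>g\<in>Ls (A \<times> (UNIV::bool set)) t. 1)"
    by (intro sum.cong refl) (simp add: sum.delta')
  finally show ?thesis by (simp add: Ls_card[OF finS] NN_def)
qed


lemma reduced_replicate: "reduced (replicate l x)"
proof (induction l)
  case (Suc l)
  have "x \<noteq> inv_letter x" using inv_letter_neq[of x] by metis
  then show ?case using Suc by (cases l) auto
qed simp

lemma layer_sub_Ls: "layer A l \<subseteq> Ls (A \<times> UNIV) l"
  by (auto simp: layer_def free_group_def Ls_def)

lemma layer_finite: "finite A \<Longrightarrow> finite (layer A l)"
  by (rule finite_subset[OF layer_sub_Ls]) (simp add: Ls_finite)

lemma layer_card_pos: "finite A \<Longrightarrow> A \<noteq> {} \<Longrightarrow> card (layer A l) > 0"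
proof -
  assume fin: "finite A" and ne: "A \<noteq> {}"
  obtain a where a: "a \<in> A" using ne by auto
  have "replicate l (a, True) \<in> layer A l"
    using a reduced_replicate by (auto simp: layer_def free_group_def)
  then show ?thesis using layer_finite[OF fin] card_gt_0_iff by blast
qed

definition dd :: "'a set \<Rightarrow> ('a \<times> bool) list set \<Rightarrow> nat \<Rightarrow> real" where
  "dd A S l = real (card {w\<in>S. length w = l}) / real (card (layer A l))"

lemma S_layer_sub: "S \<subseteq> free_group A \<Longrightarrow> {w\<in>S. length w = l} \<subseteq> layer A l"
  by (auto simp: layer_def)

lemma dd_bounds:
  assumes "finite A" "A \<noteq> {}" "S \<subseteq> free_group A"
  shows "0 \<le> dd A S l" "dd A S l \<le> 1"
proof -
  have "card {w\<in>S. length w = l} \<le> card (layer A l)"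
    using S_layer_sub[OF assms(3)] layer_finite[OF assms(1)] by (rule card_mono[rotated])
  then show "0 \<le> dd A S l" "dd A S l \<le> 1"
    using layer_card_pos[OF assms(1,2), of l] by (auto simp: dd_def)
qed

lemma Nil_notin: "product_free S \<Longrightarrow> [] \<notin> S"
proof
  assume pf: "product_free S" and n: "[] \<in> S"
  have "[] = wmul [] []" by (simp add: wmul_def)
  then show False using pf n unfolding product_free_def by blast
qed

lemma dd_0: "product_free S \<Longrightarrow> dd A S 0 = 0"
proof -
  assume "product_free S"
  then have "{w\<in>S. length w = 0} = {}" using Nil_notin by auto
  then show ?thesis by (simp add: dd_def)
qed

lemma Cnt_layer: "finite A \<Longrightarrow> Cnt A t l = real (card (layer A l)) * fc (NN A) t l"
proof -
  assume fin: "finite A"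
  have "Cnt A t l = (\<Sum>g\<in>Ls (A \<times> UNIV) t. if red g \<in> layer A l then 1 else 0::real)"
    unfolding Cnt_def
  proof (intro sum.cong refl)
    fix g assume "g \<in> Ls (A \<times> (UNIV::bool set)) t"
    then have "red g \<in> free_group A" by (intro red_free) (simp add: Ls_def)
    then show "(if length (red g) = l then 1 else 0::real) = (if red g \<in> layer A l then 1 else 0)"
      by (simp add: layer_def)
  qed
  also have "\<dots> = real (card (layer A l)) * fc (NN A) t l"
    using count_subset_layer[OF fin order_refl] by (simp add: NN_def)
  finally show ?thesis .
qed

lemma At_eq:
  assumes fin: "finite A" and ne: "A \<noteq> {}" and SF: "S \<subseteq> free_group A" and tn: "t \<le> n"
  shows "(\<Sum>u\<in>Ls (A \<times> UNIV) t. if red u \<in> S then 1 else 0::real) = NN A ^ t * (\<Sum>l\<le>n. Pr A t l * dd A S l)"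
proof -
  have "(\<Sum>u\<in>Ls (A \<times> UNIV) t. if red u \<in> S then 1 else 0::real)
      = (\<Sum>u\<in>Ls (A \<times> UNIV) t. \<Sum>l\<le>n. if red u \<in> {w\<in>S. length w = l} then 1 else 0::real)"
  proof (intro sum.cong refl)
    fix u assume u: "u \<in> Ls (A \<times> (UNIV::bool set)) t"
    then have len: "length (red u) \<le> n" using length_red[of u] tn by (simp add: Ls_def)
    have "(\<Sum>l\<le>n. if red u \<in> {w\<in>S. length w = l} then 1 else 0::real)
        = (\<Sum>l\<le>n. if length (red u) = l then (if red u \<in> S then 1 else 0) else 0::real)"
      by (intro sum.cong refl) auto
    also have "\<dots> = (if red u \<in> S then 1 else 0)" using len by (simp add: sum.delta)
    finally show "(if red u \<in> S then 1 else 0::real) = (\<Sum>l\<le>n. if red u \<in> {w\<in>S. length w = l} then 1 else 0::real)"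
      by simp
  qed
  also have "\<dots> = (\<Sum>l\<le>n. \<Sum>u\<in>Ls (A \<times> UNIV) t. if red u \<in> {w\<in>S. length w = l} then 1 else 0::real)"
    by (rule sum.swap)
  also have "\<dots> = (\<Sum>l\<le>n. real (card {w\<in>S. length w = l}) * fc (NN A) t l)"
    using count_subset_layer[OF fin S_layer_sub[OF SF]] by (simp add: NN_def)
  also have "\<dots> = NN A ^ t * (\<Sum>l\<le>n. Pr A t l * dd A S l)"
    unfolding sum_distrib_left
  proof (intro sum.cong refl)
    fix l
    have cp: "real (card (layer A l)) > 0" using layer_card_pos[OF fin ne] by simp
    have Np: "NN A ^ t > 0" using NN_pos[OF fin ne] by simp
    show "real (card {w\<in>S. length w = l}) * fc (NN A) t l = NN A ^ t * (Pr A t l * dd A S l)"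
      using cp Np NN_pos[OF fin ne] by (simp add: Pr_def dd_def Cnt_layer[OF fin] field_simps)
  qed
  finally show ?thesis .
qed

lemma hits_sum:
  assumes fin: "finite Lam"
  shows "(\<Sum>g\<in>Ls Lam n. real (card (hits S n g))) =
     (\<Sum>t\<in>{1..n}. real (card Lam) ^ (n - t) * (\<Sum>u\<in>Ls Lam t. if red u \<in> S then 1 else 0::real))"
proof -
  have "(\<Sum>g\<in>Ls Lam n. real (card (hits S n g))) = (\<Sum>g\<in>Ls Lam n. \<Sum>t\<in>{1..n}. if red (take t g) \<in> S then 1 else 0::real)"
  proof (intro sum.cong refl)
    fix g
    have "real (card (hits S n g)) = (\<Sum>t\<in>hits S n g. 1::real)" by simp
    also have "\<dots> = (\<Sum>t\<in>{1..n}. if red (take t g) \<in> S then 1 else 0::real)"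
      unfolding hits_def by (rule sum.inter_filter) simp
    finally show "real (card (hits S n g)) = (\<Sum>t\<in>{1..n}. if red (take t g) \<in> S then 1 else 0::real)" .
  qed
  also have "\<dots> = (\<Sum>t\<in>{1..n}. \<Sum>g\<in>Ls Lam n. if red (take t g) \<in> S then 1 else 0::real)"
    by (rule sum.swap)
  also have "\<dots> = (\<Sum>t\<in>{1..n}. real (card Lam) ^ (n - t) * (\<Sum>u\<in>Ls Lam t. if red u \<in> S then 1 else 0::real))"
  proof (intro sum.cong refl)
    fix t assume t: "t \<in> {1..n}"
    have e: "n = t + (n - t)" using t by simp
    have "(\<Sum>g\<in>Ls Lam n. if red (take t g) \<in> S then 1 else 0::real)
        = (\<Sum>u\<in>Ls Lam t. \<Sum>v\<in>Ls Lam (n - t). if red (take t (u @ v)) \<in> S then 1 else 0::real)"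
      by (subst e) (rule Ls_split[OF fin])
    also have "\<dots> = (\<Sum>u\<in>Ls Lam t. \<Sum>v\<in>Ls Lam (n - t). if red u \<in> S then 1 else 0::real)"
      by (intro sum.cong refl) (simp add: Ls_def)
    also have "\<dots> = real (card Lam) ^ (n - t) * (\<Sum>u\<in>Ls Lam t. if red u \<in> S then 1 else 0::real)"
      by (simp add: Ls_card[OF fin] sum_distrib_left)
    finally show "(\<Sum>g\<in>Ls Lam n. if red (take t g) \<in> S then 1 else 0::real)
        = real (card Lam) ^ (n - t) * (\<Sum>u\<in>Ls Lam t. if red u \<in> S then 1 else 0::real)" .
  qed
  finally show ?thesis .
qed

lemma main_ineq:
  assumes fin: "finite A" and two: "card A \<ge> 2" and SF: "S \<subseteq> free_group A"
    and pf: "product_free S" and Ln: "L \<le> n"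
  shows "real n - (\<Sum>t\<in>{1..n}. Bt A t L / NN A ^ t) - hb A 0 - gam A * (real L - (\<Sum>l\<le>L. dd A S l)) \<le> (real n + 1) / 2"
proof -
  have ne: "A \<noteq> {}" using two by auto
  have finS: "finite (A \<times> (UNIV::bool set))" using fin by simp
  have neS: "A \<times> (UNIV::bool set) \<noteq> {}" using ne by simp
  have Np: "NN A > 0" using NN_pos[OF fin ne] .
  have N4: "NN A \<ge> 4" using two fin by (simp add: NN_def card_Sig)
  have gpos: "gam A > 0" using N4 by (simp add: gam_def)
  define G where "G l = (\<Sum>t\<in>{1..n}. Pr A t l)" for l
  define M where "M = (\<Sum>t\<in>{1..n}. Bt A t L / NN A ^ t)"
  define D where "D = (\<Sum>l\<le>L. dd A S l)"
  have F1: "(\<Sum>t\<in>{1..n}. \<Sum>l\<le>n. Pr A t l * dd A S l) \<le> (real n + 1) / 2"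
  proof -
    define Y where "Y t = (\<Sum>l\<le>n. Pr A t l * dd A S l)" for t
    have "NN A ^ n * (\<Sum>t\<in>{1..n}. \<Sum>l\<le>n. Pr A t l * dd A S l) = (\<Sum>t\<in>{1..n}. NN A ^ n * Y t)"
      unfolding Y_def by (rule sum_distrib_left)
    also have "\<dots> = (\<Sum>t\<in>{1..n}. NN A ^ (n - t) * (NN A ^ t * (\<Sum>l\<le>n. Pr A t l * dd A S l)))"
    proof (intro sum.cong refl)
      fix t assume "t \<in> {1..n}"
      then have "NN A ^ n = NN A ^ (n - t) * NN A ^ t" by (simp add: power_add[symmetric])
      then show "NN A ^ n * Y t = NN A ^ (n - t) * (NN A ^ t * (\<Sum>l\<le>n. Pr A t l * dd A S l))"
        unfolding Y_def by (metis mult.assoc)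
    qed
    also have "\<dots> = (\<Sum>g\<in>Ls (A \<times> UNIV) n. real (card (hits S n g)))"
      unfolding hits_sum[OF finS]
    proof (intro sum.cong refl)
      fix t assume "t \<in> {1..n}"
      then have "t \<le> n" by simp
      then show "NN A ^ (n - t) * (NN A ^ t * (\<Sum>l\<le>n. Pr A t l * dd A S l)) =
          real (card (A \<times> (UNIV::bool set))) ^ (n - t) * (\<Sum>u\<in>Ls (A \<times> UNIV) t. if red u \<in> S then 1 else 0)"
        using At_eq[OF fin ne SF, of t n] by (simp add: NN_def)
    qed
    also have "\<dots> \<le> NN A ^ n * (real n + 1) / 2"
      using first_hit_bound[OF finS neS pf, of n] by (simp add: NN_def)
    finally have h: "NN A ^ n * (\<Sum>t\<in>{1..n}. \<Sum>l\<le>n. Pr A t l * dd A S l) \<le> NN A ^ n * ((real n + 1) / 2)"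
      by simp
    have "NN A ^ n > 0" using Np by simp
    then show ?thesis using h mult_le_cancel_left_pos by blast
  qed
  have F2: "(\<Sum>l\<le>n. G l * dd A S l) = (\<Sum>t\<in>{1..n}. \<Sum>l\<le>n. Pr A t l * dd A S l)"
    unfolding G_def sum_distrib_right by (rule sum.swap)
  have Gnn: "G l \<ge> 0" for l unfolding G_def using Pr_nonneg[OF fin ne] by (simp add: sum_nonneg)
  have Ghb: "G l \<le> hb A l" for l
  proof -
    have "G l \<le> (\<Sum>t\<le>n. Pr A t l)" unfolding G_def
      by (rule sum_mono2) (auto simp: Pr_nonneg[OF fin ne])
    also have "\<dots> \<le> hb A l" by (rule green_bound[OF fin two])
    finally show ?thesis .
  qed
  have F3: "(\<Sum>l\<le>L. G l * dd A S l) \<le> (\<Sum>l\<le>n. G l * dd A S l)"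
    using Ln by (intro sum_mono2) (auto simp: Gnn dd_bounds[OF fin ne SF])
  have F4: "(\<Sum>l\<le>L. G l) = real n - M"
  proof -
    have "(\<Sum>l\<le>L. G l) = (\<Sum>t\<in>{1..n}. \<Sum>l\<le>L. Pr A t l)" unfolding G_def by (rule sum.swap)
    also have "\<dots> = (\<Sum>t\<in>{1..n}. 1 - Bt A t L / NN A ^ t)"
    proof (intro sum.cong refl)
      fix t
      have "(\<Sum>l\<le>L. Pr A t l) = (\<Sum>l\<le>L. Cnt A t l) / NN A ^ t" by (simp add: Pr_def sum_divide_distrib)
      also have "\<dots> = (NN A ^ t - Bt A t L) / NN A ^ t" using Cnt_Bt[OF fin, where L=L and t=t] by (simp add: algebra_simps)
      also have "\<dots> = 1 - Bt A t L / NN A ^ t" using Np by (simp add: field_simps)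
      finally show "(\<Sum>l\<le>L. Pr A t l) = 1 - Bt A t L / NN A ^ t" .
    qed
    also have "\<dots> = real n - M" by (simp add: M_def sum_subtractf)
    finally show ?thesis .
  qed
  have split0: "\<And>f::nat \<Rightarrow> real. (\<Sum>l\<le>L. f l) = f 0 + (\<Sum>l\<in>{1..L}. f l)"
  proof -
    fix f :: "nat \<Rightarrow> real"
    have "{..L} = insert 0 {1..L}" by auto
    then show "(\<Sum>l\<le>L. f l) = f 0 + (\<Sum>l\<in>{1..L}. f l)" by simp
  qed
  have F5: "(\<Sum>l\<le>L. G l * (1 - dd A S l)) \<le> hb A 0 + gam A * (real L - D)"
  proof -
    have "(\<Sum>l\<le>L. G l * (1 - dd A S l)) = G 0 + (\<Sum>l\<in>{1..L}. G l * (1 - dd A S l))"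
      using split0 dd_0[OF pf] by simp
    also have "\<dots> \<le> hb A 0 + (\<Sum>l\<in>{1..L}. gam A * (1 - dd A S l))"
    proof (intro add_mono Ghb sum_mono)
      fix l assume "l \<in> {1..L}"
      then have "G l \<le> gam A" using Ghb[of l] by (simp add: hb_def)
      then show "G l * (1 - dd A S l) \<le> gam A * (1 - dd A S l)"
        using dd_bounds[OF fin ne SF, of l] by (intro mult_right_mono) auto
    qed
    also have "(\<Sum>l\<in>{1..L}. gam A * (1 - dd A S l)) = gam A * (real L - D)"
      using split0[of "dd A S"] dd_0[OF pf] by (simp add: D_def sum_distrib_left[symmetric] sum_subtractf)
    finally show ?thesis .
  qed
  have "(\<Sum>l\<le>L. G l * dd A S l) = (\<Sum>l\<le>L. G l) - (\<Sum>l\<le>L. G l * (1 - dd A S l))"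
    by (simp add: sum_subtractf[symmetric] algebra_simps)
  then have "real n - M - (hb A 0 + gam A * (real L - D)) \<le> (\<Sum>l\<le>L. G l * dd A S l)"
    using F4 F5 by linarith
  then show ?thesis using F1 F2 F3 by (simp add: M_def D_def)
qed


lemma exists_z:
  fixes N beta :: real
  assumes N: "N \<ge> 4" and b: "beta * ((N - 2) / N) < 1"
  shows "\<exists>z>1. ((1/z + (N-1)*z)/N) powr beta < z"
proof -
  define h where "h z = ln z - beta * ln ((1/z + (N-1)*z)/N)" for z
  have d: "(h has_real_derivative (1 - beta * ((N - 2) / N))) (at 1)"
    unfolding h_def using N
    by (auto intro!: derivative_eq_intros simp: field_simps)
  obtain d where d0: "d > 0" and dh: "\<forall>e>0. e < d \<longrightarrow> h 1 < h (1 + e)"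
    using DERIV_pos_inc_right[OF d] b by auto
  define z where "z = 1 + d/2"
  have z1: "z > 1" using d0 by (simp add: z_def)
  have "h 1 < h z" using dh d0 by (simp add: z_def)
  moreover have "h 1 = 0" using N by (simp add: h_def)
  ultimately have "0 < h z" by linarith
  then have hz: "beta * ln ((1/z + (N-1)*z)/N) < ln z" unfolding h_def by linarith
  have phipos: "(1/z + (N-1)*z)/N > 0" using z1 N by (intro divide_pos_pos add_pos_pos) auto
  have "((1/z + (N-1)*z)/N) powr beta = exp (beta * ln ((1/z + (N-1)*z)/N))"
    using phipos unfolding powr_def by (metis (no_types, lifting) less_irrefl mult.commute)
    
  also have "\<dots> < exp (ln z)" using hz by simp
  also have "\<dots> = z" using z1 by simp
  finally show ?thesis using z1 by blast
qed

lemma sq_geom_lim: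
  fixes rho :: real
  assumes "0 \<le> rho" "rho < 1"
  shows "(\<lambda>L. real L ^ 2 * rho ^ L) \<longlonglongrightarrow> 0"
proof -
  define s where "s = sqrt rho"
  have s: "norm s < 1" using assms by (simp add: s_def real_sqrt_lt_1_iff)
  have "(\<lambda>L. (of_nat L * s ^ L) * (of_nat L * s ^ L)) \<longlonglongrightarrow> 0 * 0"
    by (intro tendsto_mult powser_times_n_limit_0 s)
  moreover have "(of_nat L * s ^ L) * (of_nat L * s ^ L) = real L ^ 2 * rho ^ L" for L
    using assms by (simp add: s_def power2_eq_square power_mult_distrib[symmetric] algebra_simps)
  ultimately show ?thesis by simp
qed


lemma phi_ge1:
  fixes z N :: real
  assumes z: "z \<ge> 1" and N: "N \<ge> 2"
  shows "(1/z + (N - 1) * z) / N \<ge> 1"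
proof -
  have "(1/z + (N - 1) * z) - N = ((N - 1) * z - 1) * (z - 1) / z" using z by (simp add: field_simps)
  also have "\<dots> \<ge> 0"
  proof -
    have "1 * 1 \<le> (N - 1) * z" using N z by (intro mult_mono) auto
    then show ?thesis using z by (intro divide_nonneg_pos mult_nonneg_nonneg) auto
  qed
  finally show ?thesis using N by (simp add: field_simps)
qed

lemma M_bound:
  assumes fin: "finite A" and ne: "A \<noteq> {}" and z: "z \<ge> 1"
  defines "phi \<equiv> (1/z + (NN A - 1) * z) / NN A"
  defines "c \<equiv> (z - 1/z) / NN A"
  shows "(\<Sum>t\<in>{1..n}. Bt A t L / NN A ^ t) \<le> real n * (phi ^ n * (1 + real n * c)) / z ^ L"
proof -
  have Np: "NN A > 0" using NN_pos[OF fin ne] .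
  have N2: "NN A \<ge> 2"
  proof -
    have "card A \<ge> 1" using fin ne by (simp add: Suc_leI card_gt_0_iff)
    then show ?thesis by (simp add: NN_def card_Sig fin)
  qed
  have phi1: "phi \<ge> 1" unfolding phi_def by (rule phi_ge1[OF z N2])
  have c0: "c \<ge> 0" using z Np mult_mono[OF z z] by (simp add: c_def field_simps)
  have zL: "z ^ L > 0" using z by simp
  have "(\<Sum>t\<in>{1..n}. Bt A t L / NN A ^ t) \<le> (\<Sum>t\<in>{1..n}. phi ^ n * (1 + real n * c) / z ^ L)"
  proof (rule sum_mono)
    fix t assume t: "t \<in> {1..n}"
    have "Bt A t L / NN A ^ t \<le> (Ez A t z / z ^ L) / NN A ^ t"
      by (rule divide_right_mono[OF Bt_Ez[OF z]]) (use Np in simp)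
    also have "\<dots> = (Ez A t z / NN A ^ t) / z ^ L" by simp
    also have "\<dots> \<le> (phi ^ t * (1 + real t * c)) / z ^ L"
      unfolding phi_def c_def by (rule divide_right_mono[OF Ez_bound[OF fin ne z]]) (use zL in simp)
    also have "\<dots> \<le> (phi ^ n * (1 + real n * c)) / z ^ L"
    proof (intro divide_right_mono mult_mono)
      show "phi ^ t \<le> phi ^ n" using t phi1 by (intro power_increasing) auto
      show "1 + real t * c \<le> 1 + real n * c" using t c0 by (simp add: mult_right_mono)
    qed (use c0 phi1 zL in auto)
    finally show "Bt A t L / NN A ^ t \<le> phi ^ n * (1 + real n * c) / z ^ L" .
  qed
  also have "\<dots> = real n * (phi ^ n * (1 + real n * c)) / z ^ L" by simp
  finally show ?thesis .
qed

lemma asym_bound: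
  assumes fin: "finite A" and two: "card A \<ge> 2" and SF: "S \<subseteq> free_group A"
    and pf: "product_free S" and eps: "0 < eps" "eps \<le> 2 / NN A"
  shows "eventually (\<lambda>L. (\<Sum>l\<le>L. dd A S l) / (real L + 1) \<le> 1/2 + eps) sequentially"
proof -
  have ne: "A \<noteq> {}" using two by auto
  define N where "N = NN A"
  have N4: "N \<ge> 4" using two fin by (simp add: N_def NN_def card_Sig)
  define gm where "gm = gam A"
  have gm: "gm = N / (N - 2)" by (simp add: gm_def gam_def N_def)
  have gpos: "gm > 0" using N4 gm by simp
  define beta where "beta = gm * (1 - eps)"
  have eps1: "eps \<le> 1/2"
  proof -
    have "eps * 4 \<le> eps * N" using eps N4 by (intro mult_left_mono) auto
    moreover have "eps * N \<le> 2" using eps N4 by (simp add: N_def field_simps)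
    ultimately show ?thesis by linarith
  qed
  have beta1: "beta \<ge> 1"
  proof -
    have "1 - eps \<ge> (N - 2) / N" using eps N4 by (simp add: N_def field_simps)
    then have "gm * (1 - eps) \<ge> gm * ((N - 2) / N)" using gpos by (intro mult_left_mono) auto
    also have "gm * ((N - 2) / N) = 1" using gm N4 by simp
    finally show ?thesis by (simp add: beta_def)
  qed
  have bl: "beta * ((N - 2) / N) < 1"
  proof -
    have "beta * ((N - 2) / N) = 1 - eps" using gm N4 by (simp add: beta_def)
    then show ?thesis using eps by simp
  qed
  obtain z where z1: "z > 1" and zphi: "((1/z + (N-1)*z)/N) powr beta < z"
    using exists_z[OF N4 bl] by blast
  define phi where "phi = (1/z + (N-1)*z)/N"
  define c where "c = (z - 1/z) / N"
  have phi1: "phi \<ge> 1" unfolding phi_def using phi_ge1[of z N] z1 N4 by simp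
  have c0: "c \<ge> 0" using z1 N4 mult_mono[of 1 z 1 z] by (simp add: c_def field_simps)
  define rho where "rho = phi powr beta / z"
  have rho0: "rho \<ge> 0" using z1 by (simp add: rho_def)
  have rho1: "rho < 1" using zphi z1 by (simp add: rho_def phi_def)
  define K where "K = beta + beta ^ 2 * c"
  have K0: "K \<ge> 0" using beta1 c0 by (simp add: K_def)
  have ev1: "eventually (\<lambda>L. K * (real L ^ 2 * rho ^ L) < 1) sequentially"
  proof -
    have "(\<lambda>L. K * (real L ^ 2 * rho ^ L)) \<longlonglongrightarrow> K * 0"
      by (intro tendsto_mult tendsto_const sq_geom_lim rho0 rho1)
    then show ?thesis by (intro order_tendstoD) auto
  qed
  define C where "C = (2 + hb A 0) / gm"
  have ev2: "eventually (\<lambda>L. C / (real L + 1) \<le> eps / 2) sequentially"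
  proof -
    have "(\<lambda>L. C * inverse (real (Suc L))) \<longlonglongrightarrow> C * 0"
      by (intro tendsto_mult tendsto_const LIMSEQ_inverse_real_of_nat)
    then have "(\<lambda>L. C / (real L + 1)) \<longlonglongrightarrow> 0" by (simp add: divide_inverse add.commute)
    then have "eventually (\<lambda>L. C / (real L + 1) < eps / 2) sequentially"
      using eps by (intro order_tendstoD(2)) auto
    then show ?thesis by (rule eventually_mono) simp
  qed
  have ev3: "eventually (\<lambda>L. L \<ge> 1) sequentially" by (rule eventually_ge_at_top)
  show ?thesis
  proof (rule eventually_mono[OF eventually_conj[OF ev1 eventually_conj[OF ev2 ev3]]])
    fix L :: nat
    assume H: "K * (real L ^ 2 * rho ^ L) < 1 \<and> C / (real L + 1) \<le> eps / 2 \<and> L \<ge> 1"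
    define n where "n = nat \<lfloor>beta * real L\<rfloor>"
    have bL0: "beta * real L \<ge> 0" using beta1 by simp
    have fl0: "\<lfloor>beta * real L\<rfloor> \<ge> 0" using bL0 by simp
    have nfl: "real n = real_of_int \<lfloor>beta * real L\<rfloor>" unfolding n_def using fl0 by simp
    have fc: "real_of_int \<lfloor>beta * real L\<rfloor> \<le> beta * real L \<and> beta * real L < real_of_int (\<lfloor>beta * real L\<rfloor> + 1)"
      by (rule floor_correct)
    have n_le: "real n \<le> beta * real L" using nfl fc by linarith
    have n_ge: "real n \<ge> beta * real L - 1" using nfl fc by simp
    have Ln: "L \<le> n"
    proof -
      have "real L \<le> beta * real L" using beta1 by (simp add: mult_le_cancel_right1)
      then have "int L \<le> \<lfloor>beta * real L\<rfloor>" by (simp add: le_floor_iff)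
      then show ?thesis unfolding n_def using fl0 by (simp add: le_nat_iff)
    qed
    define M where "M = (\<Sum>t\<in>{1..n}. Bt A t L / NN A ^ t)"
    define D where "D = (\<Sum>l\<le>L. dd A S l)"
    have main: "real n - M - hb A 0 - gm * (real L - D) \<le> (real n + 1) / 2"
      using main_ineq[OF fin two SF pf Ln] by (simp add: M_def D_def gm_def)
    have Mb: "M \<le> real n * (phi ^ n * (1 + real n * c)) / z ^ L"
      using M_bound[OF fin ne, where z=z and n=n and L=L] z1 by (simp add: M_def phi_def c_def N_def)
    have phin: "phi ^ n \<le> (phi powr beta) ^ L"
    proof -
      have p0: "phi > 0" using phi1 by simp
      have "phi ^ n = phi powr real n" using p0 by (simp add: powr_realpow)
      also have "\<dots> \<le> phi powr (beta * real L)" using phi1 n_le by (intro powr_mono) auto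
      also have "\<dots> = (phi powr beta) powr real L" by (simp add: powr_powr)
      also have "\<dots> = (phi powr beta) ^ L" using p0 by (simp add: powr_realpow)
      finally show ?thesis .
    qed
    have M1: "M \<le> 1"
    proof -
      have n0: "real n \<ge> 0" by simp
      have t1: "1 + real n * c \<le> 1 + (beta * real L) * c" using n_le c0 by (simp add: mult_right_mono)
      have t0: "0 \<le> 1 + real n * c" using c0 by simp
      have pb0: "0 \<le> (phi powr beta) ^ L" by simp
      have t2: "phi ^ n * (1 + real n * c) \<le> (phi powr beta) ^ L * (1 + (beta * real L) * c)"
        by (rule mult_mono[OF phin t1 pb0 t0])
      have t3: "0 \<le> phi ^ n * (1 + real n * c)" using t0 phi1 by simp
      have "real n * (phi ^ n * (1 + real n * c)) \<le> (beta * real L) * ((phi powr beta) ^ L * (1 + (beta * real L) * c))"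
        by (rule mult_mono[OF n_le t2 bL0 t3])
      also have "\<dots> = (beta * real L + beta ^ 2 * c * real L ^ 2) * (phi powr beta) ^ L"
        by (simp add: algebra_simps power2_eq_square)
      also have "\<dots> \<le> K * real L ^ 2 * (phi powr beta) ^ L"
      proof (rule mult_right_mono)
        have "real L \<le> real L ^ 2" using H by (simp add: power2_eq_square)
        then have "beta * real L \<le> beta * real L ^ 2" using beta1 by (intro mult_left_mono) auto
        then show "beta * real L + beta ^ 2 * c * real L ^ 2 \<le> K * real L ^ 2" by (simp add: K_def algebra_simps)
      qed simp
      finally have "real n * (phi ^ n * (1 + real n * c)) / z ^ L \<le> K * real L ^ 2 * (phi powr beta) ^ L / z ^ L"
        using z1 by (simp add: divide_right_mono)
      also have "\<dots> = K * (real L ^ 2 * rho ^ L)" by (simp add: rho_def power_divide)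
      finally show ?thesis using Mb H by linarith
    qed
    have gd: "gm * (real L - D) = gm * real L - gm * D" by (simp add: right_diff_distrib)
    have "gm * D \<le> gm * real L - (real n - 1) / 2 + M + hb A 0" using main gd by argo
    also have "\<dots> \<le> gm * real L - (beta * real L - 2) / 2 + 1 + hb A 0" using n_ge M1 by argo
    also have "\<dots> = gm * (real L * (1 + eps) / 2) + (2 + hb A 0)" by (simp add: beta_def field_simps)
    finally have "D \<le> real L * (1 + eps) / 2 + C" using gpos by (simp add: C_def field_simps)
    then have "D / (real L + 1) \<le> (real L * (1 + eps) / 2 + C) / (real L + 1)" by (simp add: divide_right_mono)
    also have "\<dots> = (real L / (real L + 1)) * ((1 + eps) / 2) + C / (real L + 1)"
    proof -
      have Lp: "real L + 1 > 0" by simp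
      have e2: "real L * (1 + eps) / (2 * real L + 2) = real L * (1 / 2 + eps / 2) / (real L + 1)"
        using Lp by (simp add: divide_simps)
      show ?thesis using e2 by (simp add: add_divide_distrib)
    qed
    also have "\<dots> \<le> 1 * ((1 + eps) / 2) + eps / 2"
      using H eps by (intro add_mono mult_right_mono) auto
    finally show "(\<Sum>l\<le>L. dd A S l) / (real L + 1) \<le> 1/2 + eps" by (simp add: D_def add_divide_distrib)
  qed
qed


lemma mu_le_formula:
  assumes fin: "finite A" and B: "B \<subseteq> free_group A"
  shows "mu_le A B L = (\<Sum>l\<le>L. real (card {w\<in>B. length w = l}) / real (card (layer A l)))"
proof -
  define X where "X = {w\<in>B. length w \<le> L}"
  have finX: "finite X"
  proof (rule finite_subset)
    show "X \<subseteq> {xs. set xs \<subseteq> A \<times> UNIV \<and> length xs \<le> L}" using B by (auto simp: X_def free_group_def)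
    show "finite {xs. set xs \<subseteq> A \<times> (UNIV::bool set) \<and> length xs \<le> L}"
      using fin by (intro finite_lists_length_le) simp
  qed
  have "mu_le A B L = (\<Sum>w\<in>X. 1 / real (card (layer A (length w))))" by (simp add: mu_le_def X_def)
  also have "\<dots> = (\<Sum>w\<in>X. \<Sum>l\<le>L. if length w = l then 1 / real (card (layer A l)) else 0)"
    by (intro sum.cong refl) (auto simp: X_def sum.delta')
  also have "\<dots> = (\<Sum>l\<le>L. \<Sum>w\<in>X. if length w = l then 1 / real (card (layer A l)) else 0)"
    by (rule sum.swap)
  also have "\<dots> = (\<Sum>l\<le>L. real (card {w\<in>B. length w = l}) / real (card (layer A l)))"
  proof (intro sum.cong refl)
    fix l assume l: "l \<in> {..L}"
    have "(\<Sum>w\<in>X. if length w = l then 1 / real (card (layer A l)) else 0) = (\<Sum>w\<in>{w\<in>X. length w = l}. 1 / real (card (layer A l)))"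
      by (rule sum.inter_filter[OF finX, symmetric])
    also have "{w\<in>X. length w = l} = {w\<in>B. length w = l}" using l by (auto simp: X_def)
    finally show "(\<Sum>w\<in>X. if length w = l then 1 / real (card (layer A l)) else 0) = real (card {w\<in>B. length w = l}) / real (card (layer A l))"
      by simp
  qed
  finally show ?thesis .
qed

lemma mu_le_S: "finite A \<Longrightarrow> S \<subseteq> free_group A \<Longrightarrow> mu_le A S L = (\<Sum>l\<le>L. dd A S l)"
  by (simp add: mu_le_formula dd_def)

lemma mu_le_F: "finite A \<Longrightarrow> A \<noteq> {} \<Longrightarrow> mu_le A (free_group A) L = real L + 1"
proof -
  assume fin: "finite A" and ne: "A \<noteq> {}"
  have "mu_le A (free_group A) L = (\<Sum>l\<le>L. real (card {w\<in>free_group A. length w = l}) / real (card (layer A l)))"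
    by (rule mu_le_formula[OF fin order_refl])
  also have "\<dots> = (\<Sum>l\<le>L. 1)"
  proof (intro sum.cong refl)
    fix l
    have "card (layer A l) > 0" by (rule layer_card_pos[OF fin ne])
    then show "real (card {w\<in>free_group A. length w = l}) / real (card (layer A l)) = 1"
      by (simp add: layer_def)
  qed
  finally show ?thesis by simp
qed

lemma single_reduced:
  "set w \<subseteq> {a} \<times> UNIV \<Longrightarrow> reduced w \<Longrightarrow> w = replicate (length w) (hd w)"
proof (induction w)
  case (Cons x ws)
  show ?case
  proof (cases ws)
    case Nil then show ?thesis by simp
  next
    case (Cons y ys)
    have r: "y \<noteq> inv_letter x" "reduced ws" using Cons.prems Cons by auto
    have "ws = replicate (length ws) (hd ws)" using Cons.IH Cons.prems r(2) by auto
    moreover have "y = x" using Cons.prems Cons r(1)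
      by (cases x, cases y) (auto simp: inv_letter_def)
    ultimately show ?thesis using Cons by (metis list.sel(1) replicate_Suc length_Cons)
  qed
qed simp

lemma card_one_bound:
  assumes A: "A = {a}" and SF: "S \<subseteq> free_group A" and pf: "product_free S"
  shows "(\<Sum>l\<le>L. dd A S l) \<le> (real L + 1) / 2"
proof -
  have fin: "finite A" using A by simp
  define rT where "rT l = replicate l (a, True)" for l
  define rF where "rF l = replicate l (a, False)" for l
  have lay: "layer A l = {rT l, rF l}" if l: "l \<ge> 1" for l
  proof
    show "layer A l \<subseteq> {rT l, rF l}"
    proof
      fix w assume w: "w \<in> layer A l"
      then have ws: "set w \<subseteq> {a} \<times> UNIV" "reduced w" "length w = l" using A by (auto simp: layer_def free_group_def)
      then have "w \<noteq> []" using l by auto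
      then have "hd w \<in> {a} \<times> UNIV" using ws(1) by auto
      then have "hd w = (a, True) \<or> hd w = (a, False)" by (cases "hd w") auto
      then show "w \<in> {rT l, rF l}" using single_reduced[OF ws(1,2)] ws(3) by (auto simp: rT_def rF_def)
    qed
    show "{rT l, rF l} \<subseteq> layer A l" using A reduced_replicate by (auto simp: rT_def rF_def layer_def free_group_def)
  qed
  have neq: "rT l \<noteq> rF l" if "l \<ge> 1" for l using that by (cases l) (auto simp: rT_def rF_def)
  have ddl: "dd A S l = ((if rT l \<in> S then 1 else 0) + (if rF l \<in> S then 1 else 0)) / 2" if l: "l \<ge> 1" for l
  proof -
    have "{w\<in>S. length w = l} = {w\<in>S. w \<in> layer A l}" using SF by (auto simp: layer_def)
    also have "\<dots> = ({rT l} \<inter> S) \<union> ({rF l} \<inter> S)" using lay[OF l] by auto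
    finally have e: "{w\<in>S. length w = l} = ({rT l} \<inter> S) \<union> ({rF l} \<inter> S)" .
    have "card {w\<in>S. length w = l} = card ({rT l} \<inter> S) + card ({rF l} \<inter> S)"
      unfolding e using neq[OF l] by (intro card_Un_disjoint) auto
    moreover have "card (layer A l) = 2" using lay[OF l] neq[OF l] by simp
    ultimately show ?thesis by (auto simp: dd_def)
  qed
  have hitb: "(\<Sum>l\<in>{1..L}. if replicate l x \<in> S then 1 else 0::real) \<le> (real L + 1) / 2" for x
  proof -
    have Ls: "Ls {x} L = {replicate L x}"
      by (auto simp: Ls_def intro: replicate_length_same[symmetric])
    have rr: "red (replicate t x) = replicate t x" for t
      by (rule red_of_reduced[OF reduced_replicate])
    have "hits S L (replicate L x) = {t\<in>{1..L}. replicate t x \<in> S}"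
      by (auto simp: hits_def rr min_def)
    then have "real (card (hits S L (replicate L x))) = (\<Sum>t\<in>{t\<in>{1..L}. replicate t x \<in> S}. 1::real)"
      by simp
    also have "\<dots> = (\<Sum>l\<in>{1..L}. if replicate l x \<in> S then 1 else 0::real)"
      by (rule sum.inter_filter) simp
    finally have "real (card (hits S L (replicate L x))) = (\<Sum>l\<in>{1..L}. if replicate l x \<in> S then 1 else 0::real)" .
    moreover have "(\<Sum>g\<in>Ls {x} L. real (card (hits S L g))) \<le> real (card {x}) ^ L * (real L + 1) / 2"
      by (rule first_hit_bound[OF _ _ pf]) auto
    ultimately show ?thesis using Ls by simp
  qed
  have "(\<Sum>l\<le>L. dd A S l) = dd A S 0 + (\<Sum>l\<in>{1..L}. dd A S l)"
  proof -
    have "{..L} = insert 0 {1..L}" by auto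
    then show ?thesis by simp
  qed
  also have "\<dots> = (\<Sum>l\<in>{1..L}. ((if rT l \<in> S then 1 else 0) + (if rF l \<in> S then 1 else 0)) / 2)"
  proof -
    have "(\<Sum>l\<in>{1..L}. dd A S l) = (\<Sum>l\<in>{1..L}. ((if rT l \<in> S then 1 else 0) + (if rF l \<in> S then 1 else 0)) / 2)"
      by (intro sum.cong refl ddl) simp
    then show ?thesis using dd_0[OF pf] by simp
  qed
  also have "\<dots> = ((\<Sum>l\<in>{1..L}. if rT l \<in> S then 1 else 0) + (\<Sum>l\<in>{1..L}. if rF l \<in> S then 1 else 0)) / 2"
    by (simp only: sum_divide_distrib[symmetric] sum.distrib)
  also have "\<dots> \<le> ((real L + 1) / 2 + (real L + 1) / 2) / 2"
    using hitb[of "(a, True)"] hitb[of "(a, False)"] by (intro divide_right_mono add_mono) (auto simp: rT_def rF_def)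
  finally show ?thesis by simp
qed

theorem theorem1p1:
  fixes A :: "'a set" and S :: "('a \<times> bool) list set"
  assumes "finite A"
    and "S \<subseteq> free_group A"
    and "product_free S"
  shows "upper_density A S \<le> ereal (1/2)"
proof -
  note fin = assms(1) and SF = assms(2) and pf = assms(3)
  show ?thesis
  proof (cases "A = {}")
    case True
    have "S = {}"
    proof -
      have "free_group A \<subseteq> {[]}" using True by (auto simp: free_group_def)
      then show ?thesis using SF Nil_notin[OF pf] by auto
    qed
    then have "mu_le A S n = 0" for n by (simp add: mu_le_def)
    then show ?thesis unfolding upper_density_def by (intro Limsup_bounded) simp
  next
    case ne: False
    have ratio: "mu_le A S L / mu_le A (free_group A) L = (\<Sum>l\<le>L. dd A S l) / (real L + 1)" for L
      by (simp add: mu_le_S[OF fin SF] mu_le_F[OF fin ne])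
    show ?thesis
    proof (cases "card A = 1")
      case True
      then obtain a where a: "A = {a}" using card_1_singletonE by blast
      have "(\<Sum>l\<le>L. dd A S l) / (real L + 1) \<le> 1/2" for L
        using card_one_bound[OF a SF pf, of L] by (simp add: divide_le_eq)
      then show ?thesis unfolding upper_density_def ratio by (intro Limsup_bounded) simp
    next
      case False
      then have two: "card A \<ge> 2" using ne fin by (metis One_nat_def Suc_1 Suc_leI card_gt_0_iff le_neq_implies_less less_Suc_eq_le)
      have Np: "NN A > 0" using NN_pos[OF fin ne] .
      show ?thesis unfolding upper_density_def ratio
      proof (rule ereal_le_epsilon2)
        fix e :: real assume e: "0 < e"
        define eps where "eps = min e (2 / NN A)"
        have eps: "0 < eps" "eps \<le> 2 / NN A" "eps \<le> e" using e Np by (auto simp: eps_def)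
        have "eventually (\<lambda>L. (\<Sum>l\<le>L. dd A S l) / (real L + 1) \<le> 1/2 + eps) sequentially"
          by (rule asym_bound[OF fin two SF pf eps(1,2)])
        then have "eventually (\<lambda>L. ereal ((\<Sum>l\<le>L. dd A S l) / (real L + 1)) \<le> ereal (1/2) + ereal e) sequentially"
          by (rule eventually_mono) (use eps(3) in simp)
        then show "limsup (\<lambda>L. ereal ((\<Sum>l\<le>L. dd A S l) / (real L + 1))) \<le> ereal (1/2) + ereal e"
          by (rule Limsup_bounded)
      qed
    qed
  qed
qed

end
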